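(* Let $Y=W_1\times W_2$ with coordinates $(a,b,x,y)$, $T=ab$, and $$\Phi=\begin{pmatrix}1-T & a^4\\ -b^4 & 1+T+T^2+T^3\end{pmatrix},\qquad \varphi(a,b,x,y)=\Big(a,b,\Phi\tbinom{x}{y}\Big).$$ Then $\mu=\varphi\circ\mu_0$ is a real circle form on $Y$, and it is equivalent to the linear real circle form $\mu_0$.
   Context: For $k\ge1$, $W_k=\mathbb{C}^2$ is the $\mathbb{C}^*$-module with weights $(k,-k)$: $t\cdot(x,y)=(t^kx,t^{-k}y)$. Thus on $Y=W_1\times W_2$, $t\cdot(a,b,x,y)=(ta,t^{-1}b,t^2x,t^{-2}y)$. Let $\sigma(t)=\overline{t}^{-1}$ on $\mathbb{C}^*$. A real circle form on $Y$ is an antiholomorphic involution $\mu$ of $Y$ with $\mu(t\cdot p)=\sigma(t)\cdot\mu(p)$ for all $t\in\mathbb{C}^*$, $p\in Y$; two such forms $\mu_1,\mu_2$ are equivalent if $\mu_2=\psi\circ\mu_1\circ\psi^{-1}$ for some regular $\mathbb{C}^*$-equivariant automorphism $\psi$ of $Y$. Here $\mu_0(a,b,x,y)=(\overline{b},\overline{a},\overline{y},\overline{x})$. *)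

theory Defs
  imports "HOL-Analysis.Analysis"
begin

type_synonym Y = "complex \<times> complex \<times> complex \<times> complex"

definition act :: "complex \<Rightarrow> Y \<Rightarrow> Y" where
  "act t p = (case p of (a,b,x,y) \<Rightarrow> (t*a, inverse t * b, t^2 * x, inverse (t^2) * y))"

definition sigma :: "complex \<Rightarrow> complex" where
  "sigma t = inverse (cnj t)"

definition cscale :: "complex \<Rightarrow> Y \<Rightarrow> Y" where
  "cscale c p = (case p of (a,b,x,y) \<Rightarrow> (c*a, c*b, c*x, c*y))"

definition antiholomorphic :: "(Y \<Rightarrow> Y) \<Rightarrow> bool" where
  "antiholomorphic f \<longleftrightarrow> (\<forall>p. \<exists>D. (f has_derivative D) (at p) \<and>
       (\<forall>c v. D (cscale c v) = cscale (cnj c) (D v)))"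

definition real_circle_form :: "(Y \<Rightarrow> Y) \<Rightarrow> bool" where
  "real_circle_form mu \<longleftrightarrow> antiholomorphic mu \<and> (\<forall>p. mu (mu p) = p) \<and>
     (\<forall>t p. t \<noteq> 0 \<longrightarrow> mu (act t p) = act (sigma t) (mu p))"

inductive poly_fun :: "(Y \<Rightarrow> complex) \<Rightarrow> bool" where
  const: "poly_fun (\<lambda>p. c)"
| proj1: "poly_fun (\<lambda>(a,b,x,y). a)"
| proj2: "poly_fun (\<lambda>(a,b,x,y). b)"
| proj3: "poly_fun (\<lambda>(a,b,x,y). x)"
| proj4: "poly_fun (\<lambda>(a,b,x,y). y)"
| add: "poly_fun f \<Longrightarrow> poly_fun g \<Longrightarrow> poly_fun (\<lambda>p. f p + g p)"
| mult: "poly_fun f \<Longrightarrow> poly_fun g \<Longrightarrow> poly_fun (\<lambda>p. f p * g p)"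

definition poly_map :: "(Y \<Rightarrow> Y) \<Rightarrow> bool" where
  "poly_map f \<longleftrightarrow> poly_fun (\<lambda>p. fst (f p)) \<and> poly_fun (\<lambda>p. fst (snd (f p))) \<and>
     poly_fun (\<lambda>p. fst (snd (snd (f p)))) \<and> poly_fun (\<lambda>p. snd (snd (snd (f p))))"

definition regular_aut :: "(Y \<Rightarrow> Y) \<Rightarrow> bool" where
  "regular_aut f \<longleftrightarrow> bij f \<and> poly_map f \<and> poly_map (inv f)"

definition equivariant :: "(Y \<Rightarrow> Y) \<Rightarrow> bool" where
  "equivariant f \<longleftrightarrow> (\<forall>t p. t \<noteq> 0 \<longrightarrow> f (act t p) = act t (f p))"

definition equivalent_forms :: "(Y \<Rightarrow> Y) \<Rightarrow> (Y \<Rightarrow> Y) \<Rightarrow> bool" where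
  "equivalent_forms mu1 mu2 \<longleftrightarrow>
     (\<exists>psi. regular_aut psi \<and> equivariant psi \<and> mu2 = psi \<circ> mu1 \<circ> inv psi)"

definition mu0 :: "Y \<Rightarrow> Y" where
  "mu0 p = (case p of (a,b,x,y) \<Rightarrow> (cnj b, cnj a, cnj y, cnj x))"

definition phi :: "Y \<Rightarrow> Y" where
  "phi p = (case p of (a,b,x,y) \<Rightarrow> (let T = a*b in
     (a, b, (1 - T) * x + a^4 * y, - (b^4) * x + (1 + T + T^2 + T^3) * y)))"

end

theory Submission
  imports Defs
begin

definition pp :: "complex \<Rightarrow> complex" where "pp T = 1 + ((-1+\<i>)/2)*T - ((1+\<i>)/4)*T^2"
definition qq :: complex where "qq = (1-\<i>)/4"
definition rr :: "complex \<Rightarrow> complex" where "rr T = (-3+\<i>)/4 - ((1+\<i>)/4)*T"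
definition ss :: "complex \<Rightarrow> complex" where "ss T = 1 + ((1-\<i>)/2)*T + ((1-\<i>)/4)*T^2 + ((1-\<i>)/4)*T^3"

lemma det1: "pp T * ss T - T^4 * qq * rr T = 1"
  unfolding pp_def ss_def qq_def rr_def
  by (simp add: field_simps power2_eq_square power3_eq_cube power4_eq_xxxx)

definition psi :: "Y \<Rightarrow> Y" where
  "psi p = (case p of (a,b,x,y) \<Rightarrow> (a, b, pp (a*b) * x + a^4 * qq * y, b^4 * rr (a*b) * x + ss (a*b) * y))"

definition psii :: "Y \<Rightarrow> Y" where
  "psii p = (case p of (a,b,x,y) \<Rightarrow> (a, b, ss (a*b) * x - a^4 * qq * y, - (b^4 * rr (a*b) * x) + pp (a*b) * y))"

lemma psi_psii: "psi (psii p) = p"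
proof -
  obtain a b x y where p: "p = (a,b,x,y)" by (cases p) auto
  have d: "pp (a*b) * ss (a*b) - (a*b)^4 * qq * rr (a*b) = 1" by (rule det1)
  show ?thesis unfolding p psi_def psii_def
    using d by (simp add: algebra_simps power_mult_distrib)
qed

lemma psii_psi: "psii (psi p) = p"
proof -
  obtain a b x y where p: "p = (a,b,x,y)" by (cases p) auto
  have d: "pp (a*b) * ss (a*b) - (a*b)^4 * qq * rr (a*b) = 1" by (rule det1)
  show ?thesis unfolding p psi_def psii_def
    using d by (simp add: algebra_simps power_mult_distrib)
qed


lemma inv_psi: "inv psi = psii"
  by (metis inv_equality psi_psii psii_psi)

lemma bij_psi: "bij psi"
  by (metis bij_betw_byWitness psi_psii psii_psi top_greatest subset_UNIV surj_def inj_def bijI)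

lemma phi_mu0_psi: "phi \<circ> mu0 = psi \<circ> mu0 \<circ> psii"
proof
  fix p :: Y
  obtain a b x y where p: "p = (a,b,x,y)" by (cases p) auto
  show "(phi \<circ> mu0) p = (psi \<circ> mu0 \<circ> psii) p"
    unfolding p
    by (simp add: phi_def mu0_def psi_def psii_def pp_def qq_def rr_def ss_def Let_def
        field_simps power2_eq_square power3_eq_cube power4_eq_xxxx)
qed


lemma pf_a: "poly_fun (\<lambda>p. fst p)"
proof -
  have "(\<lambda>p::Y. fst p) = (\<lambda>(a,b,x,y). a)" by auto
  thus ?thesis using poly_fun.proj1 by simp
qed
lemma pf_b: "poly_fun (\<lambda>p. fst (snd p))"
proof -
  have "(\<lambda>p::Y. fst (snd p)) = (\<lambda>(a,b,x,y). b)" by auto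
  thus ?thesis using poly_fun.proj2 by simp
qed
lemma pf_x: "poly_fun (\<lambda>p. fst (snd (snd p)))"
proof -
  have "(\<lambda>p::Y. fst (snd (snd p))) = (\<lambda>(a,b,x,y). x)" by auto
  thus ?thesis using poly_fun.proj3 by simp
qed
lemma pf_y: "poly_fun (\<lambda>p. snd (snd (snd p)))"
proof -
  have "(\<lambda>p::Y. snd (snd (snd p))) = (\<lambda>(a,b,x,y). y)" by auto
  thus ?thesis using poly_fun.proj4 by simp
qed
lemma pf_pow: "poly_fun f \<Longrightarrow> poly_fun (\<lambda>p. f p ^ n)"
  by (induction n) (auto intro: poly_fun.intros)
lemma pf_minus: "poly_fun f \<Longrightarrow> poly_fun (\<lambda>p. - f p)"
proof -
  assume "poly_fun f"
  hence "poly_fun (\<lambda>p. (\<lambda>_. -1) p * f p)" by (intro poly_fun.mult poly_fun.const)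
  thus ?thesis by simp
qed
lemma pf_diff: "poly_fun f \<Longrightarrow> poly_fun g \<Longrightarrow> poly_fun (\<lambda>p. f p - g p)"
proof -
  assume "poly_fun f" "poly_fun g"
  hence "poly_fun (\<lambda>p. f p + (\<lambda>q. - g q) p)" by (intro poly_fun.add pf_minus)
  thus ?thesis by simp
qed
lemma pf_pp: "poly_fun f \<Longrightarrow> poly_fun (\<lambda>p. pp (f p))"
  unfolding pp_def by (intro pf_diff pf_pow poly_fun.intros; assumption?)
lemma pf_rr: "poly_fun f \<Longrightarrow> poly_fun (\<lambda>p. rr (f p))"
  unfolding rr_def by (intro pf_diff pf_pow poly_fun.intros; assumption?)
lemma pf_ss: "poly_fun f \<Longrightarrow> poly_fun (\<lambda>p. ss (f p))"
  unfolding ss_def by (intro pf_diff pf_pow poly_fun.intros; assumption?)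

lemma psi_alt: "psi = (\<lambda>p. (fst p, fst (snd p),
   pp (fst p * fst (snd p)) * fst (snd (snd p)) + fst p ^ 4 * qq * snd (snd (snd p)),
   fst (snd p) ^ 4 * rr (fst p * fst (snd p)) * fst (snd (snd p)) + ss (fst p * fst (snd p)) * snd (snd (snd p))))"
  by (auto simp: psi_def split: prod.splits)
lemma psii_alt: "psii = (\<lambda>p. (fst p, fst (snd p),
   ss (fst p * fst (snd p)) * fst (snd (snd p)) - fst p ^ 4 * qq * snd (snd (snd p)),
   - (fst (snd p) ^ 4 * rr (fst p * fst (snd p)) * fst (snd (snd p))) + pp (fst p * fst (snd p)) * snd (snd (snd p))))"
  by (auto simp: psii_def split: prod.splits)

lemmas pf_all = pf_a pf_b pf_x pf_y pf_pow pf_minus pf_diff pf_pp pf_rr pf_ss poly_fun.add poly_fun.mult poly_fun.const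

lemma poly_psi: "poly_map psi"
  unfolding poly_map_def psi_alt by (simp only: fst_conv snd_conv) (intro conjI pf_all)
lemma poly_psii: "poly_map psii"
  unfolding poly_map_def psii_alt by (simp only: fst_conv snd_conv) (intro conjI pf_all)

lemma equiv_psi: "equivariant psi"
  unfolding equivariant_def
proof (intro allI impI)
  fix t :: complex and p :: Y
  assume t: "t \<noteq> 0"
  obtain a b x y where p: "p = (a,b,x,y)" by (cases p) auto
  have T: "t * a * (inverse t * b) = a * b" using t by (simp add: field_simps)
  show "psi (act t p) = act t (psi p)"
    unfolding p using t
    by (simp add: psi_def act_def T field_simps power2_eq_square power4_eq_xxxx)
qed


lemma invol: "(phi \<circ> mu0) ((phi \<circ> mu0) p) = p"
proof -
  obtain a b x y where p: "p = (a,b,x,y)" by (cases p) auto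
  show ?thesis unfolding p
    by (simp add: phi_def mu0_def Let_def field_simps power2_eq_square power3_eq_cube power4_eq_xxxx)
qed

lemma equiv_mu: "t \<noteq> 0 \<Longrightarrow> (phi \<circ> mu0) (act t p) = act (sigma t) ((phi \<circ> mu0) p)"
proof -
  assume t: "t \<noteq> 0"
  obtain a b x y where p: "p = (a,b,x,y)" by (cases p) auto
  have ct: "cnj t \<noteq> 0" using t by simp
  show ?thesis unfolding p using t ct
    by (simp add: phi_def mu0_def act_def sigma_def Let_def field_simps power2_eq_square power3_eq_cube power4_eq_xxxx)
qed

definition Dphi :: "Y \<Rightarrow> Y \<Rightarrow> Y" where
  "Dphi q v = (case q of (a,b,x,y) \<Rightarrow> case v of (da,db,dx,dy) \<Rightarrow>
     (da, db,
      (1 - a*b) * dx - (a*db + da*b) * x + 4 * a^3 * da * y + a^4 * dy,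
      - (4 * b^3 * db * x) - b^4 * dx + (1 + 2*(a*b) + 3*(a*b)^2) * (a*db + da*b) * y
        + (1 + a*b + (a*b)^2 + (a*b)^3) * dy))"

lemma phi_alt: "phi = (\<lambda>p. (fst p, fst (snd p),
   (1 - fst p * fst (snd p)) * fst (snd (snd p)) + fst p ^ 4 * snd (snd (snd p)),
   - (fst (snd p) ^ 4) * fst (snd (snd p)) + (1 + fst p * fst (snd p) + (fst p * fst (snd p))^2 + (fst p * fst (snd p))^3) * snd (snd (snd p))))"
  by (auto simp: phi_def Let_def split: prod.splits)

lemma mu0_alt: "mu0 = (\<lambda>p. (cnj (fst (snd p)), cnj (fst p), cnj (snd (snd (snd p))), cnj (fst (snd (snd p)))))"
  by (auto simp: mu0_def split: prod.splits)

lemma phi_deriv: "(phi has_derivative Dphi q) (at q)"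
proof -
  obtain a b x y where q: "q = (a,b,x,y)" by (cases q) auto
  show ?thesis unfolding phi_alt q
    apply (auto intro!: derivative_eq_intros)
    apply (rule ext)
    apply (auto simp: Dphi_def split: prod.splits)
    apply (simp_all add: algebra_simps power2_eq_square power3_eq_cube)
    done
qed

lemma mu0_deriv: "(mu0 has_derivative mu0) (at q)"
  unfolding mu0_alt
  apply (auto intro!: derivative_eq_intros)
  done

lemma antiholo: "antiholomorphic (phi \<circ> mu0)"
  unfolding antiholomorphic_def
proof
  fix p :: Y
  have "((phi \<circ> mu0) has_derivative (Dphi (mu0 p) \<circ> mu0)) (at p)"
    by (rule diff_chain_at[OF mu0_deriv phi_deriv])
  moreover have "\<forall>c v. (Dphi (mu0 p) \<circ> mu0) (cscale c v) = cscale (cnj c) ((Dphi (mu0 p) \<circ> mu0) v)"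
  proof (intro allI)
    fix c :: complex and v :: Y
    obtain a b x y where p: "p = (a,b,x,y)" by (cases p) auto
    obtain da db dx dy where v: "v = (da,db,dx,dy)" by (cases v) auto
    show "(Dphi (mu0 p) \<circ> mu0) (cscale c v) = cscale (cnj c) ((Dphi (mu0 p) \<circ> mu0) v)"
      unfolding p v by (simp add: Dphi_def mu0_def cscale_def algebra_simps)
  qed
  ultimately show "\<exists>D. ((phi \<circ> mu0) has_derivative D) (at p) \<and>
       (\<forall>c v. D (cscale c v) = cscale (cnj c) (D v))" by blast
qed

theorem proposition6p1:
  shows "real_circle_form (phi \<circ> mu0) \<and> equivalent_forms mu0 (phi \<circ> mu0)"
proof
  show "real_circle_form (phi \<circ> mu0)"
    unfolding real_circle_form_def using antiholo invol equiv_mu by blast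
  show "equivalent_forms mu0 (phi \<circ> mu0)"
    unfolding equivalent_forms_def regular_aut_def
    using bij_psi poly_psi poly_psii equiv_psi phi_mu0_psi inv_psi by metis
qed

end
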